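(* Let $G$ be a group and $k\in\mathbb{N}$, and suppose $[\overline{G}_k:\overline{G}_{k+1}]<\infty$. Then $\bigcap_{i=1}^\infty\overline{G}_i=\overline{G}_k$.
   Context: The lower central series is $G_1=G$, $G_{i+1}=[G,G_i]$, where $[x,y]=x^{-1}y^{-1}xy$ and $[A,B]=\langle[a,b]:a\in A,b\in B\rangle$. The generalised commutator subgroups are $\overline{G}_k=\{g\in G:\exists n\in\mathbb{N},\ g^n\in G_k\}$ (these are subgroups, decreasing in $k$). *)

theory Defs
  imports "HOL-Algebra.Algebra"
begin

definition grp_comm :: "('a, 'b) monoid_scheme \<Rightarrow> 'a \<Rightarrow> 'a \<Rightarrow> 'a" where
  "grp_comm G x y = inv\<^bsub>G\<^esub> x \<otimes>\<^bsub>G\<^esub> inv\<^bsub>G\<^esub> y \<otimes>\<^bsub>G\<^esub> x \<otimes>\<^bsub>G\<^esub> y"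

definition comm_subgroup :: "('a, 'b) monoid_scheme \<Rightarrow> 'a set \<Rightarrow> 'a set \<Rightarrow> 'a set" where
  "comm_subgroup G A B = generate G {grp_comm G a b | a b. a \<in> A \<and> b \<in> B}"

primrec lcs0 :: "('a, 'b) monoid_scheme \<Rightarrow> nat \<Rightarrow> 'a set" where
  "lcs0 G 0 = carrier G"
| "lcs0 G (Suc n) = comm_subgroup G (carrier G) (lcs0 G n)"

text \<open>Lower central series, 1-indexed: lower_central G 1 = G, G_(i+1) = [G, G_i].\<close>
definition lower_central :: "('a, 'b) monoid_scheme \<Rightarrow> nat \<Rightarrow> 'a set" where
  "lower_central G i = lcs0 G (i - 1)"

definition gen_comm :: "('a, 'b) monoid_scheme \<Rightarrow> nat \<Rightarrow> 'a set" where
  "gen_comm G k = {g \<in> carrier G. \<exists>n::nat. n > 0 \<and> g [^]\<^bsub>G\<^esub> n \<in> lower_central G k}"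

end

theory Submission
  imports Defs
begin

context group
begin

lemma sub_pow_closed:
  assumes "subgroup H G" "h \<in> H" shows "h [^] (n::nat) \<in> H"
  using assms by (induct n) (auto simp: subgroup.one_closed subgroup.m_closed)

lemma canc1: "x \<in> carrier G \<Longrightarrow> y \<in> carrier G \<Longrightarrow> x \<otimes> (inv x \<otimes> y) = y"
  by (simp add: m_assoc[symmetric])

lemma canc2: "x \<in> carrier G \<Longrightarrow> y \<in> carrier G \<Longrightarrow> inv x \<otimes> (x \<otimes> y) = y"
  by (simp add: m_assoc[symmetric])

lemma gc_closed: "x \<in> carrier G \<Longrightarrow> y \<in> carrier G \<Longrightarrow> grp_comm G x y \<in> carrier G"
  by (simp add: grp_comm_def)

lemma gc_conj:
  assumes "x \<in> carrier G" "g \<in> carrier G" "a \<in> carrier G"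
  shows "x \<otimes> grp_comm G g a \<otimes> inv x = grp_comm G (x \<otimes> g \<otimes> inv x) (x \<otimes> a \<otimes> inv x)"
  using assms by (simp add: grp_comm_def inv_mult_group m_assoc canc1 canc2)

lemma gc_inv:
  assumes "x \<in> carrier G" "y \<in> carrier G"
  shows "inv (grp_comm G x y) = grp_comm G y x"
  using assms by (simp add: grp_comm_def inv_mult_group m_assoc)

lemma gc_one_commute:
  assumes "x \<in> carrier G" "y \<in> carrier G" "grp_comm G x y = \<one>"
  shows "x \<otimes> y = y \<otimes> x"
proof -
  have "grp_comm G x y = inv (y \<otimes> x) \<otimes> (x \<otimes> y)"
    using assms by (simp add: grp_comm_def inv_mult_group m_assoc)
  then have "inv (y \<otimes> x) \<otimes> (x \<otimes> y) = \<one>" using assms by simp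
  then show ?thesis using assms
    by (metis inv_closed inv_inv inv_equality m_closed)
qed

lemma gc_prod:
  assumes "x \<in> carrier G" "y \<in> carrier G" "z \<in> carrier G"
  shows "grp_comm G x (y \<otimes> z) = grp_comm G x z \<otimes> (inv z \<otimes> grp_comm G x y \<otimes> z)"
  using assms by (simp add: grp_comm_def inv_mult_group m_assoc canc1 canc2)

lemma lcs_carrier: "lcs0 G n \<subseteq> carrier G"
proof (induct n)
  case 0 then show ?case by simp
next
  case (Suc n)
  have "{grp_comm G a b | a b. a \<in> carrier G \<and> b \<in> lcs0 G n} \<subseteq> carrier G"
    using Suc gc_closed by blast
  then show ?case by (simp add: comm_subgroup_def generate_incl)
qed

lemma lcs_normal: "lcs0 G n \<lhd> G"
proof (induct n)
  case 0 then show ?case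
    by (simp add: normal_inv_iff subgroup_self)
next
  case (Suc n)
  interpret N: normal "lcs0 G n" G by (rule Suc)
  have S: "{grp_comm G a b | a b. a \<in> carrier G \<and> b \<in> lcs0 G n} \<subseteq> carrier G"
    using lcs_carrier gc_closed by blast
  show ?case
    unfolding lcs0.simps comm_subgroup_def
  proof (rule normal_generateI[OF S])
    fix h g assume h: "h \<in> {grp_comm G a b | a b. a \<in> carrier G \<and> b \<in> lcs0 G n}"
      and g: "g \<in> carrier G"
    then obtain a b where ab: "h = grp_comm G a b" "a \<in> carrier G" "b \<in> lcs0 G n" by blast
    have bc: "b \<in> carrier G" using ab lcs_carrier by blast
    have "g \<otimes> h \<otimes> inv g = grp_comm G (g \<otimes> a \<otimes> inv g) (g \<otimes> b \<otimes> inv g)"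
      using ab bc g gc_conj by simp
    moreover have "g \<otimes> b \<otimes> inv g \<in> lcs0 G n" using N.inv_op_closed2 g ab by blast
    moreover have "g \<otimes> a \<otimes> inv g \<in> carrier G" using g ab by simp
    ultimately show "g \<otimes> h \<otimes> inv g \<in> {grp_comm G a b | a b. a \<in> carrier G \<and> b \<in> lcs0 G n}"
      by blast
  qed
qed

lemma lcs_subgroup: "subgroup (lcs0 G n) G"
  using lcs_normal normal_imp_subgroup by blast

lemma gc_in: "g \<in> carrier G \<Longrightarrow> a \<in> lcs0 G n \<Longrightarrow> grp_comm G g a \<in> lcs0 G (Suc n)"
  by (auto simp: comm_subgroup_def intro: generate.incl)

lemma lcs_Suc_sub: "lcs0 G (Suc n) \<subseteq> lcs0 G n"
proof -
  interpret N: normal "lcs0 G n" G by (rule lcs_normal)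
  have "{grp_comm G a b | a b. a \<in> carrier G \<and> b \<in> lcs0 G n} \<subseteq> lcs0 G n"
  proof
    fix h assume "h \<in> {grp_comm G a b | a b. a \<in> carrier G \<and> b \<in> lcs0 G n}"
    then obtain a b where ab: "h = grp_comm G a b" "a \<in> carrier G" "b \<in> lcs0 G n" by blast
    have bc: "b \<in> carrier G" using ab lcs_carrier by blast
    have "inv a \<otimes> inv b \<otimes> a \<in> lcs0 G n"
      using N.inv_op_closed1[of a "inv b"] ab N.m_inv_closed by blast
    then show "h \<in> lcs0 G n" using ab N.m_closed unfolding grp_comm_def by blast
  qed
  then show ?thesis
    by (simp add: comm_subgroup_def generate_subgroup_incl lcs_subgroup)
qed

lemma lcs_antimono: "m \<le> n \<Longrightarrow> lcs0 G n \<subseteq> lcs0 G m"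
proof (induct n)
  case 0 then show ?case by simp
next
  case (Suc n)
  then show ?case using lcs_Suc_sub
    by (metis le_Suc_eq order_refl order_trans)
qed


lemma key_step:
  assumes hyp: "\<forall>a\<in>lcs0 G n. \<exists>m>0. a [^] (m::nat) \<in> lcs0 G (Suc n)"
  shows "\<forall>b\<in>lcs0 G (Suc n). \<exists>m>0. b [^] (m::nat) \<in> lcs0 G (Suc (Suc n))"
proof -
  define C where "C = lcs0 G (Suc (Suc n))"
  define B where "B = lcs0 G (Suc n)"
  define A where "A = lcs0 G n"
  interpret N: normal C G unfolding C_def by (rule lcs_normal)
  define Q where "Q = G Mod C"
  define p where "p = (\<lambda>a. C #> a)"
  have Qg: "group Q" unfolding Q_def by (rule N.factorgroup_is_group)
  interpret Q: group Q by (rule Qg)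
  have hom: "group_hom G Q p" unfolding group_hom_def group_hom_axioms_def Q_def p_def
    using N.r_coset_hom_Mod N.factorgroup_is_group is_group by blast
  interpret H: group_hom G Q p by (rule hom)
  have Bc: "B \<subseteq> carrier G" unfolding B_def by (rule lcs_carrier)
  have Ac: "A \<subseteq> carrier G" unfolding A_def by (rule lcs_carrier)
  have P1: "x \<in> carrier G \<Longrightarrow> (p x = \<one>\<^bsub>Q\<^esub>) = (x \<in> C)" for x
    unfolding p_def Q_def one_FactGroup
    using coset_join1 coset_join2 N.subgroup_axioms by blast
  have P2: "x \<in> carrier G \<Longrightarrow> y \<in> carrier G \<Longrightarrow> p (grp_comm G x y) = grp_comm Q (p x) (p y)" for x y
    by (simp add: grp_comm_def)
  have P3: "z \<in> carrier G \<Longrightarrow> w \<in> B \<Longrightarrow> p z \<otimes>\<^bsub>Q\<^esub> p w = p w \<otimes>\<^bsub>Q\<^esub> p z" for z w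
  proof -
    assume z: "z \<in> carrier G" and w: "w \<in> B"
    have wc: "w \<in> carrier G" using w Bc by blast
    have "grp_comm G z w \<in> C" using gc_in[OF z] w unfolding B_def C_def by blast
    then have "p (grp_comm G z w) = \<one>\<^bsub>Q\<^esub>" using P1 gc_closed z wc by blast
    then have "grp_comm Q (p z) (p w) = \<one>\<^bsub>Q\<^esub>" using P2 z wc by simp
    then show ?thesis using Q.gc_one_commute z wc by simp
  qed
  have P4: "x \<in> carrier G \<Longrightarrow> y \<in> A \<Longrightarrow> z \<in> carrier G \<Longrightarrow>
      p (grp_comm G x (y \<otimes> z)) = p (grp_comm G x z) \<otimes>\<^bsub>Q\<^esub> p (grp_comm G x y)" for x y z
  proof -
    assume x: "x \<in> carrier G" and y: "y \<in> A" and z: "z \<in> carrier G"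
    have yc: "y \<in> carrier G" using y Ac by blast
    have wB: "grp_comm G x y \<in> B" using gc_in[OF x] y unfolding A_def B_def by blast
    have wc: "grp_comm G x y \<in> carrier G" using gc_closed x yc by blast
    have "p (inv z \<otimes> grp_comm G x y \<otimes> z) = inv\<^bsub>Q\<^esub> (p z) \<otimes>\<^bsub>Q\<^esub> p (grp_comm G x y) \<otimes>\<^bsub>Q\<^esub> p z"
      using z wc by simp
    also have "\<dots> = inv\<^bsub>Q\<^esub> (p z) \<otimes>\<^bsub>Q\<^esub> (p z \<otimes>\<^bsub>Q\<^esub> p (grp_comm G x y))"
      using P3[OF z wB] z wc by (simp add: Q.m_assoc)
    also have "\<dots> = p (grp_comm G x y)" using z wc by (simp add: Q.canc2)
    finally have e: "p (inv z \<otimes> grp_comm G x y \<otimes> z) = p (grp_comm G x y)" .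
    show ?thesis using gc_prod[OF x yc z] e x yc z wc gc_closed by simp
  qed
  have P5: "x \<in> carrier G \<Longrightarrow> y \<in> A \<Longrightarrow>
      p (grp_comm G x (y [^] (k::nat))) = p (grp_comm G x y) [^]\<^bsub>Q\<^esub> k" for x y k
  proof (induct k)
    case 0
    then show ?case by (simp add: grp_comm_def)
  next
    case (Suc k)
    have yc: "y \<in> carrier G" using Suc Ac by blast
    have "y [^] Suc k = y \<otimes> y [^] k" by (rule nat_pow_Suc2[OF yc])
    then show ?case using P4[of x y "y [^] k"] Suc yc by simp
  qed
  define T where "T = {g \<in> carrier G. \<exists>m::nat. m > 0 \<and> p g [^]\<^bsub>Q\<^esub> m = \<one>\<^bsub>Q\<^esub>}"
  have gensT: "h \<in> T" if h: "h \<in> {grp_comm G a b | a b. a \<in> carrier G \<and> b \<in> lcs0 G n}" for h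
  proof -
    obtain x a where xa: "h = grp_comm G x a" "x \<in> carrier G" "a \<in> A" using h unfolding A_def by blast
    have ac: "a \<in> carrier G" using xa Ac by blast
    obtain m :: nat where m: "m > 0" "a [^] m \<in> B" using hyp xa unfolding A_def B_def by blast
    have "grp_comm G x (a [^] m) \<in> C" using gc_in[OF xa(2)] m unfolding B_def C_def by blast
    then have "p (grp_comm G x (a [^] m)) = \<one>\<^bsub>Q\<^esub>" using P1 gc_closed xa ac by simp
    then have "p h [^]\<^bsub>Q\<^esub> m = \<one>\<^bsub>Q\<^esub>" using P5 xa by simp
    then show ?thesis unfolding T_def using m xa gc_closed ac by blast
  qed
  have BT: "b \<in> T" if b: "b \<in> B" for b
    using b unfolding B_def lcs0.simps comm_subgroup_def
  proof (induct b rule: generate.induct)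
    case one
    then show ?case unfolding T_def by (auto intro: exI[of _ 1])
  next
    case (incl h)
    then show ?case using gensT by blast
  next
    case (inv h)
    then have hT: "h \<in> T" using gensT by blast
    then obtain m :: nat where m: "m > 0" "p h [^]\<^bsub>Q\<^esub> m = \<one>\<^bsub>Q\<^esub>" "h \<in> carrier G" unfolding T_def by blast
    have "p (inv h) [^]\<^bsub>Q\<^esub> m = \<one>\<^bsub>Q\<^esub>" using m by (simp add: Q.nat_pow_inv)
    then show ?case unfolding T_def using m by auto
  next
    case (eng h1 h2)
    obtain m1 :: nat where m1: "m1 > 0" "p h1 [^]\<^bsub>Q\<^esub> m1 = \<one>\<^bsub>Q\<^esub>" "h1 \<in> carrier G"
      using eng unfolding T_def by blast
    obtain m2 :: nat where m2: "m2 > 0" "p h2 [^]\<^bsub>Q\<^esub> m2 = \<one>\<^bsub>Q\<^esub>" "h2 \<in> carrier G"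
      using eng unfolding T_def by blast
    have h2B: "h2 \<in> B" using eng unfolding B_def lcs0.simps comm_subgroup_def by simp
    have c: "p h1 \<otimes>\<^bsub>Q\<^esub> p h2 = p h2 \<otimes>\<^bsub>Q\<^esub> p h1" using P3[OF m1(3) h2B] .
    have "p (h1 \<otimes> h2) [^]\<^bsub>Q\<^esub> (m1 * m2) = p h1 [^]\<^bsub>Q\<^esub> (m1 * m2) \<otimes>\<^bsub>Q\<^esub> p h2 [^]\<^bsub>Q\<^esub> (m1 * m2)"
      using m1 m2 Q.pow_mult_distrib[OF c] by simp
    also have "\<dots> = \<one>\<^bsub>Q\<^esub>"
    proof -
      have a1: "p h1 \<in> carrier Q" "p h2 \<in> carrier Q" using m1 m2 by auto
      have e1: "p h1 [^]\<^bsub>Q\<^esub> (m1 * m2) = \<one>\<^bsub>Q\<^esub>"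
        by (metis Q.nat_pow_pow Q.nat_pow_one a1(1) m1(2))
      have e2: "p h2 [^]\<^bsub>Q\<^esub> (m1 * m2) = \<one>\<^bsub>Q\<^esub>"
        by (metis Q.nat_pow_pow Q.nat_pow_one a1(2) m2(2) mult.commute)
      show ?thesis using e1 e2 by simp
    qed
    finally have "p (h1 \<otimes> h2) [^]\<^bsub>Q\<^esub> (m1 * m2) = \<one>\<^bsub>Q\<^esub>" .
    moreover have "m1 * m2 > 0" using m1 m2 by simp
    ultimately show ?case unfolding T_def using m1 m2 by blast
  qed
  show ?thesis
  proof
    fix b assume b: "b \<in> lcs0 G (Suc n)"
    then obtain m :: nat where m: "m > 0" "p b [^]\<^bsub>Q\<^esub> m = \<one>\<^bsub>Q\<^esub>" "b \<in> carrier G"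
      using BT unfolding B_def T_def by blast
    then have "p (b [^] m) = \<one>\<^bsub>Q\<^esub>" using H.hom_nat_pow by simp
    then have "b [^] m \<in> C" using P1 m by simp
    then show "\<exists>m>0. b [^] (m::nat) \<in> lcs0 G (Suc (Suc n))" using m unfolding C_def by blast
  qed
qed



lemma gen_comm_pow:
  assumes "g \<in> gen_comm G k"
  shows "g [^] (i::nat) \<in> gen_comm G k"
proof -
  obtain n :: nat where n: "n > 0" "g [^] n \<in> lower_central G k" "g \<in> carrier G"
    using assms(1) unfolding gen_comm_def by blast
  have "(g [^] i) [^] n = (g [^] n) [^] i" using n(3) nat_pow_pow by (metis mult.commute)
  also have "\<dots> \<in> lower_central G k"
    using n sub_pow_closed lcs_subgroup unfolding lower_central_def by blast
  finally have "(g [^] i) [^] n \<in> lower_central G k" .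
  then show ?thesis unfolding gen_comm_def using n nat_pow_closed by blast
qed

lemma step_index:
  assumes fin: "finite (rcosets\<^bsub>(G\<lparr>carrier := gen_comm G k\<rparr>)\<^esub> (gen_comm G (Suc k)))"
  shows "gen_comm G k \<subseteq> gen_comm G (Suc k)"
proof
  fix g assume g: "g \<in> gen_comm G k"
  have gc: "g \<in> carrier G" using g unfolding gen_comm_def by blast
  define K where "K = gen_comm G (Suc k)"
  define f where "f = (\<lambda>i::nat. K #> g [^] i)"
  have "range f \<subseteq> rcosets\<^bsub>(G\<lparr>carrier := gen_comm G k\<rparr>)\<^esub> K"
  proof
    fix Y assume "Y \<in> range f"
    then obtain i where i: "Y = f i" by blast
    have "g [^] i \<in> gen_comm G k" using gen_comm_pow[OF g] .
    then show "Y \<in> rcosets\<^bsub>(G\<lparr>carrier := gen_comm G k\<rparr>)\<^esub> K"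
      unfolding i f_def RCOSETS_def r_coset_def by auto
  qed
  then have "finite (range f)" using fin K_def finite_subset by blast
  then have "\<not> inj f" using range_inj_infinite by blast
  then obtain i j where ij: "f i = f j" "i \<noteq> j" unfolding inj_def by blast
  then obtain i j where ij: "f i = f j" "i < j"
    by (metis linorder_neqE_nat)
  have oneK: "\<one> \<in> K"
    unfolding K_def gen_comm_def lower_central_def
    using lcs_subgroup subgroup.one_closed by (auto intro: exI[of _ 1])
  have "g [^] j \<in> K #> g [^] j" unfolding r_coset_def using oneK gc by force
  then have "g [^] j \<in> K #> g [^] i" using ij unfolding f_def by simp
  then obtain c where c: "c \<in> K" "g [^] j = c \<otimes> g [^] i" unfolding r_coset_def by blast
  have cc: "c \<in> carrier G" using c unfolding K_def gen_comm_def by blast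
  have "g [^] j = g [^] (j - i) \<otimes> g [^] i" using ij gc by (simp add: nat_pow_mult)
  then have "c = g [^] (j - i)" using c cc gc by simp
  then obtain m :: nat where m: "m > 0" "(g [^] (j - i)) [^] m \<in> lower_central G (Suc k)"
    using c unfolding K_def gen_comm_def by blast
  then have "g [^] ((j - i) * m) \<in> lower_central G (Suc k)" using gc by (simp add: nat_pow_pow)
  moreover have "(j - i) * m > 0" using m ij by simp
  ultimately show "g \<in> gen_comm G (Suc k)" unfolding gen_comm_def using gc by blast
qed

lemma main_aux:
  assumes "group G" and "k \<ge> 1"
    and "finite (rcosets\<^bsub>(G\<lparr>carrier := gen_comm G k\<rparr>)\<^esub> (gen_comm G (Suc k)))"
  shows "(\<Inter>i\<in>{1..}. gen_comm G i) = gen_comm G k"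
proof -
  have sub: "gen_comm G k \<subseteq> gen_comm G (Suc k)" using step_index assms(3) by blast
  have base: "\<forall>a\<in>lcs0 G (k - 1). \<exists>m::nat>0. a [^] m \<in> lcs0 G (Suc (k - 1))"
  proof
    fix a assume a: "a \<in> lcs0 G (k - 1)"
    have ac: "a \<in> carrier G" using a lcs_carrier by blast
    have "a \<in> gen_comm G k" unfolding gen_comm_def lower_central_def
      using a ac by (auto intro: exI[of _ 1])
    then have "a \<in> gen_comm G (Suc k)" using sub by blast
    then show "\<exists>m::nat>0. a [^] m \<in> lcs0 G (Suc (k - 1))"
      unfolding gen_comm_def lower_central_def using assms(2) by auto
  qed
  have tors: "\<forall>a\<in>lcs0 G (k - 1 + j). \<exists>m::nat>0. a [^] m \<in> lcs0 G (Suc (k - 1 + j))" for j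
  proof (induct j)
    case 0 then show ?case using base by simp
  next
    case (Suc j) then show ?case using key_step[of "k - 1 + j"] by simp
  qed
  have up: "gen_comm G k \<subseteq> gen_comm G (k + j)" for j
  proof (induct j)
    case 0 then show ?case by simp
  next
    case (Suc j)
    show ?case
    proof
      fix g assume "g \<in> gen_comm G k"
      then have g: "g \<in> gen_comm G (k + j)" using Suc by blast
      have lc: "lower_central G (k + j) = lcs0 G (k - 1 + j)"
        using assms(2) by (simp add: lower_central_def add.commute)
      have lc2: "lower_central G (k + Suc j) = lcs0 G (Suc (k - 1 + j))"
        using assms(2) by (simp add: lower_central_def)
      obtain n :: nat where n: "n > 0" "g [^] n \<in> lower_central G (k + j)" "g \<in> carrier G"
        using g unfolding gen_comm_def by blast
      then obtain m :: nat where m: "m > 0" "(g [^] n) [^] m \<in> lcs0 G (Suc (k - 1 + j))"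
        using tors lc by blast
      then have "g [^] (n * m) \<in> lower_central G (k + Suc j)" using n lc2 by (simp add: nat_pow_pow)
      moreover have "n * m > 0" using n m by simp
      ultimately show "g \<in> gen_comm G (k + Suc j)"
        unfolding gen_comm_def using n by blast
    qed
  qed
  have down: "i \<le> k \<Longrightarrow> gen_comm G k \<subseteq> gen_comm G i" for i
  proof -
    assume ik: "i \<le> k"
    have "lcs0 G (k - 1) \<subseteq> lcs0 G (i - 1)" using lcs_antimono ik by simp
    then show ?thesis unfolding gen_comm_def lower_central_def by blast
  qed
  have all: "gen_comm G k \<subseteq> gen_comm G i" for i
  proof (cases "i \<le> k")
    case True then show ?thesis using down by blast
  next
    case False then have "i = k + (i - k)" by simp
    then show ?thesis using up[of "i - k"] by metis
  qed
  show ?thesis using all assms(2) by blast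
qed

end

theorem lemma5p7:
  fixes G :: "('a, 'b) monoid_scheme" and k :: nat
  assumes "group G" and "k \<ge> 1"
    and "finite (rcosets\<^bsub>G\<lparr>carrier := gen_comm G k\<rparr>\<^esub> (gen_comm G (Suc k)))"
  shows "(\<Inter>i\<in>{1..}. gen_comm G i) = gen_comm G k"
  using group.main_aux[OF assms(1) assms(1) assms(2) assms(3)] .

end
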